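(* (i) Let $\mathcal A=(D,A,B,C)\in\mathbb{R}^n\times\mathbb{R}\times\mathbb{R}\times\mathbb{R}$ with $C<0$ and $B-\frac{|D|^2}{4C}\in\mathcal S$, so that the associated $\rho=e^AZ(\beta,\Theta)$ and $\Theta=-\frac1{2C}$ are positive. Then $\nabla^2_{\mathcal A}\Sigma(\mathcal A)$ is a positive-definite symmetric $(n+3)\times(n+3)$ matrix. (ii) $\Sigma$ is a strictly convex function of $\mathcal A$ on the domain $\mathbb A=\{(D,A,B,C)\in\mathbb{R}^n\times\mathbb{R}\times\mathbb{R}\times\mathbb{R}:\ C<0,\ B-\frac{|D|^2}{4C}\in\mathcal S\}$.
   Context: Let $n\ge1$ and $(\gamma_m)_{m\ge1}$ in $[0,\infty)$ with $\mathcal S:=\{\beta\in\mathbb{R}:\sum_m\frac{me^{\beta m}}{\gamma_m}<\infty\}\neq\emptyset$. $Z(\beta,\Theta)=(2\pi\Theta)^{n/2}\sum_m\frac{me^{\beta m}}{\gamma_m}$. For $\mathcal A=(D,A,B,C)$ (entropic variables; $D\in\mathbb{R}^n$, $A,B,C\in\mathbb{R}$) and $m\ge1$, $v\in\mathbb{R}^n$, let $\boldsymbol\mu_m(v)\bullet\mathcal A:=m\,v\cdot D+A+mB+m|v|^2C$. The Massieu–Planck potential is $$\Sigma(\mathcal A)=\sum_{m\ge1}\int_{\mathbb{R}^n}\frac{m^{n/2}}{\gamma_m}e^{\boldsymbol\mu_m(v)\bullet\mathcal A}\,dv.$$ The associated macroscopic parameters are $\Theta=-\frac1{2C}$, $u=-\frac{D}{2C}$,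 $\beta=B-\frac{|D|^2}{4C}$, $\rho=e^AZ(\beta,\Theta)$. *)

theory Defs
  imports "HOL-Analysis.Analysis"
begin

text \<open>The index m ranges over m \<ge> 1; sums over m \<ge> 1 are written as sums over Suc m.\<close>

type_synonym 'n entropic = "(real^'n) \<times> real \<times> real \<times> real"

text \<open>The set S. The series is taken in the extended nonnegative reals, with the
  convention c / 0 = \<infinity> for c > 0 (so S \<noteq> {} forces all gamma_m > 0).\<close>
definition S_set :: "(nat \<Rightarrow> real) \<Rightarrow> real set" where
  "S_set \<gamma> = {\<beta>. (\<Sum>m. ennreal (real (Suc m) * exp (\<beta> * real (Suc m))) / ennreal (\<gamma> (Suc m))) < \<infinity>}"

definition mu_dot :: "nat \<Rightarrow> real^'n \<Rightarrow> ('n::finite) entropic \<Rightarrow> real" where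
  "mu_dot m v X = (let D = fst X; A = fst (snd X); B = fst (snd (snd X)); C = snd (snd (snd X)) in
      real m * (v \<bullet> D) + A + real m * B + real m * (norm v)\<^sup>2 * C)"

definition Sigma :: "(nat \<Rightarrow> real) \<Rightarrow> ('n::finite) entropic \<Rightarrow> real" where
  "Sigma \<gamma> X = (\<Sum>m. LINT v|lborel.
      (real (Suc m) powr (real CARD('n) / 2) / \<gamma> (Suc m)) * exp (mu_dot (Suc m) v X))"

definition entropic_domain :: "(nat \<Rightarrow> real) \<Rightarrow> ('n::finite) entropic set" where
  "entropic_domain \<gamma> = {X. snd (snd (snd X)) < 0 \<and>
     fst (snd (snd X)) - (norm (fst X))\<^sup>2 / (4 * snd (snd (snd X))) \<in> S_set \<gamma>}"

definition has_hessian :: "('a::euclidean_space \<Rightarrow> real) \<Rightarrow> ('a \<Rightarrow> 'a) \<Rightarrow> 'a \<Rightarrow> bool" where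
  "has_hessian f H x \<longleftrightarrow> (\<exists>G. (\<forall>\<^sub>F y in nhds x. (f has_derivative (\<lambda>h. G y \<bullet> h)) (at y))
      \<and> (G has_derivative H) (at x))"

definition symmetric_op :: "('a::real_inner \<Rightarrow> 'a) \<Rightarrow> bool" where
  "symmetric_op H \<longleftrightarrow> (\<forall>h k. H h \<bullet> k = h \<bullet> H k)"

definition pos_def_op :: "('a::real_inner \<Rightarrow> 'a) \<Rightarrow> bool" where
  "pos_def_op H \<longleftrightarrow> (\<forall>h. h \<noteq> 0 \<longrightarrow> h \<bullet> H h > 0)"

definition strict_convex_on :: "'a::real_vector set \<Rightarrow> ('a \<Rightarrow> real) \<Rightarrow> bool" where
  "strict_convex_on S f \<longleftrightarrow> convex S \<and>
    (\<forall>x\<in>S. \<forall>y\<in>S. \<forall>t. x \<noteq> y \<and> 0 < t \<and> t < 1 \<longrightarrow>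
       f ((1 - t) *\<^sub>R x + t *\<^sub>R y) < (1 - t) * f x + t * f y)"

end

theory Submission
  imports Defs "HOL-Probability.Probability"
begin


lemma gauss1:
  fixes c e :: real assumes c: "c > 0"
  shows "(\<integral>\<^sup>+x. ennreal (exp (e*x - c*x\<^sup>2)) \<partial>lborel) = ennreal (sqrt (pi/c) * exp (e\<^sup>2/(4*c)))"
proof -
  define \<sigma> where "\<sigma> = sqrt (1/(2*c))"
  define \<mu> where "\<mu> = e/(2*c)"
  have s2: "\<sigma>\<^sup>2 = 1/(2*c)" using c by (simp add: \<sigma>_def)
  have nd: "normal_density \<mu> \<sigma> x = 1/sqrt(pi/c) * exp (-(c*(x-\<mu>)\<^sup>2))" for x
  proof -
    have "2 * pi * \<sigma>\<^sup>2 = pi/c" using s2 c by simp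
    moreover have "(x - \<mu>)\<^sup>2/ (2 * \<sigma>\<^sup>2) = c*(x-\<mu>)\<^sup>2" using s2 c by simp
    ultimately show ?thesis by (simp add: normal_density_def)
  qed
  have eq: "exp (e*x - c*x\<^sup>2) = (sqrt (pi/c) * exp (e\<^sup>2/(4*c))) * normal_density \<mu> \<sigma> x" for x
  proof -
    have "e*x - c*x\<^sup>2 = e\<^sup>2/(4*c) + (-(c*(x-\<mu>)\<^sup>2))"
      using c unfolding \<mu>_def by (simp add: field_simps power2_eq_square)
    then have "exp (e*x - c*x\<^sup>2) = exp (e\<^sup>2/(4*c)) * exp (-(c*(x-\<mu>)\<^sup>2))" by (simp add: exp_add[symmetric])
    moreover have "sqrt (pi/c) > 0" using c by simp
    ultimately show ?thesis unfolding nd using c by simp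
  qed
  have n1: "(\<integral>\<^sup>+x. ennreal (normal_density \<mu> \<sigma> x) \<partial>lborel) = 1"
    using c by (subst nn_integral_eq_integral) (simp_all add: integrable_normal_density integral_normal_density \<sigma>_def)
  have "(\<integral>\<^sup>+x. ennreal (exp (e*x - c*x\<^sup>2)) \<partial>lborel)
      = (\<integral>\<^sup>+x. ennreal (sqrt (pi/c) * exp (e\<^sup>2/(4*c))) * ennreal (normal_density \<mu> \<sigma> x) \<partial>lborel)"
    by (subst eq) (use c in \<open>simp add: ennreal_mult\<close>)
  also have "\<dots> = ennreal (sqrt (pi/c) * exp (e\<^sup>2/(4*c))) * (\<integral>\<^sup>+x. ennreal (normal_density \<mu> \<sigma> x) \<partial>lborel)"
    by (rule nn_integral_cmult) simp
  finally show ?thesis using n1 by simp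
qed

lemma gaussn:
  fixes D :: "'a::euclidean_space" and c e :: real assumes c: "c > 0"
  shows "(\<integral>\<^sup>+v. ennreal (exp (e*(v \<bullet> D) - c*(norm v)\<^sup>2)) \<partial>lborel)
     = ennreal (sqrt (pi/c) ^ DIM('a) * exp (e\<^sup>2 * (norm D)\<^sup>2/(4*c)))"
proof -
  have eq: "ennreal (exp (e*(v \<bullet> D) - c*(norm v)\<^sup>2)) = (\<Prod>b\<in>Basis. ennreal (exp ((e * (D \<bullet> b))*(v \<bullet> b) - c*(v \<bullet> b)\<^sup>2)))" for v
  proof -
    have "e*(v \<bullet> D) - c*(norm v)\<^sup>2 = (\<Sum>b\<in>Basis. (e * (D \<bullet> b))*(v \<bullet> b) - c*(v \<bullet> b)\<^sup>2)"
    proof -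
      have n: "(norm v)\<^sup>2 = (\<Sum>b\<in>Basis. (v \<bullet> b)\<^sup>2)"
        unfolding power2_norm_eq_inner by (subst euclidean_inner) (simp add: power2_eq_square)
      show ?thesis unfolding n by (simp add: euclidean_inner[of v D] sum_subtractf sum_distrib_left algebra_simps)
    qed
    then show ?thesis by (simp add: exp_sum prod_ennreal)
  qed
  have "(\<integral>\<^sup>+v. ennreal (exp (e*(v \<bullet> D) - c*(norm v)\<^sup>2)) \<partial>lborel)
      = (\<Prod>b\<in>Basis. (\<integral>\<^sup>+x. ennreal (exp ((e * (D \<bullet> b))*x - c*x\<^sup>2)) \<partial>lborel))"
    unfolding eq by (rule nn_integral_lborel_prod) auto
  also have "\<dots> = (\<Prod>b\<in>Basis. ennreal (sqrt (pi/c) * exp ((e * (D \<bullet> b))\<^sup>2/(4*c))))"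
    using gauss1[OF c] by simp
  also have "\<dots> = ennreal (\<Prod>b\<in>Basis. sqrt (pi/c) * exp ((e * (D \<bullet> b))\<^sup>2/(4*c)))"
    by (rule prod_ennreal) (use c in auto)
  also have "(\<Prod>b\<in>Basis. sqrt (pi/c) * exp ((e * (D \<bullet> b))\<^sup>2/(4*c))) = sqrt (pi/c) ^ DIM('a) * exp (e\<^sup>2 * (norm D)\<^sup>2/(4*c))"
  proof -
    have "(\<Sum>b\<in>Basis. (e * (D \<bullet> b))\<^sup>2/(4*c)) = e\<^sup>2 * (norm D)\<^sup>2/(4*c)"
    proof -
      have n: "(norm D)\<^sup>2 = (\<Sum>b\<in>Basis. (D \<bullet> b)\<^sup>2)"
        unfolding power2_norm_eq_inner by (subst euclidean_inner) (simp add: power2_eq_square)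
      show ?thesis unfolding n by (simp add: sum_divide_distrib[symmetric] sum_distrib_left power_mult_distrib)
    qed
    then show ?thesis by (simp add: prod.distrib exp_sum[symmetric])
  qed
  finally show ?thesis .
qed

lemma gaussn_int:
  fixes D :: "'a::euclidean_space" and c e :: real assumes c: "c > 0"
  shows "(LINT v|lborel. exp (e*(v \<bullet> D) - c*(norm v)\<^sup>2)) = sqrt (pi/c) ^ DIM('a) * exp (e\<^sup>2 * (norm D)\<^sup>2/(4*c))"
  by (subst integral_eq_nn_integral) (use c in \<open>auto simp: gaussn[OF c]\<close>)


section \<open>The set S\<close>

lemma gamma_pos:
  assumes g: "\<forall>m\<ge>1. \<gamma> m \<ge> 0" and S: "S_set \<gamma> \<noteq> {}" and m: "m \<ge> 1"
  shows "\<gamma> m > 0"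
proof (rule ccontr)
  assume "\<not> \<gamma> m > 0"
  then have g0: "\<gamma> m = 0" using g m by force
  obtain b where b: "b \<in> S_set \<gamma>" using S by auto
  obtain k where k: "m = Suc k" using m by (cases m) auto
  have "ennreal (real (Suc k) * exp (b * real (Suc k))) / ennreal (\<gamma> (Suc k)) < \<infinity>"
    using b unfolding S_set_def by (auto intro: ennreal_suminf_lessD)
  moreover have "ennreal (real (Suc k) * exp (b * real (Suc k))) / ennreal (\<gamma> (Suc k)) = \<infinity>"
    using g0 k by simp
  ultimately show False by simp
qed

lemma S_iff:
  assumes gp: "\<And>m. m \<ge> 1 \<Longrightarrow> \<gamma> m > 0"
  shows "b \<in> S_set \<gamma> \<longleftrightarrow> summable (\<lambda>m. real (Suc m) * exp (b * real (Suc m)) / \<gamma> (Suc m))"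
proof -
  have gs: "\<gamma> (Suc m) > 0" for m using gp[of "Suc m"] by simp
  have eq: "(\<Sum>m. ennreal (real (Suc m) * exp (b * real (Suc m))) / ennreal (\<gamma> (Suc m)))
     = (\<Sum>m. ennreal (real (Suc m) * exp (b * real (Suc m)) / \<gamma> (Suc m)))"
    using gs by (intro suminf_cong divide_ennreal) auto
  have nn: "\<And>m. 0 \<le> real (Suc m) * exp (b * real (Suc m)) / \<gamma> (Suc m)"
    using gs by (auto intro!: divide_nonneg_pos)
  show ?thesis
  proof
    assume "b \<in> S_set \<gamma>"
    then have "(\<Sum>m. ennreal (real (Suc m) * exp (b * real (Suc m))) / ennreal (\<gamma> (Suc m))) < \<infinity>"
      by (simp only: S_set_def mem_Collect_eq)
    then have "(\<Sum>m. ennreal (real (Suc m) * exp (b * real (Suc m)) / \<gamma> (Suc m))) < \<infinity>"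
      by (simp only: eq)
    then have "(\<Sum>m. ennreal (real (Suc m) * exp (b * real (Suc m)) / \<gamma> (Suc m))) \<noteq> top"
      by simp
    then show "summable (\<lambda>m. real (Suc m) * exp (b * real (Suc m)) / \<gamma> (Suc m))"
      using nn by (rule summable_suminf_not_top[rotated])
  next
    assume "summable (\<lambda>m. real (Suc m) * exp (b * real (Suc m)) / \<gamma> (Suc m))"
    then have "(\<Sum>m. ennreal (real (Suc m) * exp (b * real (Suc m)) / \<gamma> (Suc m))) < \<infinity>"
      using suminf_ennreal2[OF nn] by simp
    then have "(\<Sum>m. ennreal (real (Suc m) * exp (b * real (Suc m))) / ennreal (\<gamma> (Suc m))) < \<infinity>"
      by (simp only: eq)
    then show "b \<in> S_set \<gamma>" by (simp only: S_set_def mem_Collect_eq)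
  qed
qed

lemma summable_pow_le:
  assumes gp: "\<And>m. m \<ge> 1 \<Longrightarrow> \<gamma> m > 0" and b': "b' \<in> S_set \<gamma>" and le: "b \<le> b'" and j: "j \<le> 1"
  shows "summable (\<lambda>m. real (Suc m) ^ j * exp (b * real (Suc m)) / \<gamma> (Suc m))"
proof (rule summable_comparison_test[OF _ iffD1[OF S_iff[OF gp] b']])
  have gs: "\<gamma> (Suc m) > 0" for m using gp[of "Suc m"] by simp
  show "\<exists>N. \<forall>n\<ge>N. norm (real (Suc n) ^ j * exp (b * real (Suc n)) / \<gamma> (Suc n))
      \<le> real (Suc n) * exp (b' * real (Suc n)) / \<gamma> (Suc n)"
  proof (intro exI allI impI)
    fix n :: nat
    have "real (Suc n) ^ j \<le> real (Suc n)" using j by (cases j) auto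
    moreover have "exp (b * real (Suc n)) \<le> exp (b' * real (Suc n))" using le
      by (simp add: mult_right_mono)
    ultimately have "real (Suc n) ^ j * exp (b * real (Suc n)) \<le> real (Suc n) * exp (b' * real (Suc n))"
      by (intro mult_mono) auto
    then show "norm (real (Suc n) ^ j * exp (b * real (Suc n)) / \<gamma> (Suc n))
      \<le> real (Suc n) * exp (b' * real (Suc n)) / \<gamma> (Suc n)"
      using gs[of n] by (simp add: divide_right_mono)
  qed
qed

lemma S_down:
  assumes gp: "\<And>m. m \<ge> 1 \<Longrightarrow> \<gamma> m > 0" and b': "b' \<in> S_set \<gamma>" and le: "b \<le> b'"
  shows "b \<in> S_set \<gamma>"
  using summable_pow_le[OF gp b' le, of 1] by (simp add: S_iff[OF gp])

lemma summable_pow2: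
  assumes gp: "\<And>m. m \<ge> 1 \<Longrightarrow> \<gamma> m > 0" and b': "b' \<in> S_set \<gamma>" and lt: "b < b'" and j: "j \<le> 2"
  shows "summable (\<lambda>m. real (Suc m) ^ j * exp (b * real (Suc m)) / \<gamma> (Suc m))"
proof (rule summable_comparison_test[OF _ summable_mult[OF iffD1[OF S_iff[OF gp] b'], of "1/(b'-b)"]])
  have gs: "\<gamma> (Suc m) > 0" for m using gp[of "Suc m"] by simp
  define d where "d = b' - b"
  have d: "d > 0" using lt by (simp add: d_def)
  show "\<exists>N. \<forall>n\<ge>N. norm (real (Suc n) ^ j * exp (b * real (Suc n)) / \<gamma> (Suc n))
      \<le> 1/(b'-b) * (real (Suc n) * exp (b' * real (Suc n)) / \<gamma> (Suc n))"
  proof (intro exI allI impI)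
    fix n :: nat
    define x where "x = real (Suc n)"
    have x1: "x \<ge> 1" by (simp add: x_def)
    have "real (Suc n) ^ j \<le> x^2" using j x1 unfolding x_def[symmetric] by (intro power_increasing) auto
    moreover have "x^2 * exp (b * x) \<le> 1/d * (x * exp (b' * x))"
    proof -
      have "d * x \<le> exp (d * x)" using exp_ge_add_one_self[of "d*x"] by linarith
      then have "x * (d*x) * exp (b*x) \<le> x * exp (d*x) * exp (b*x)"
        using x1 by (intro mult_right_mono mult_left_mono) auto
      also have "\<dots> = x * exp (b' * x)" by (simp add: d_def exp_add[symmetric] algebra_simps)
      finally show ?thesis using d by (simp add: field_simps power2_eq_square)
    qed
    ultimately have "real (Suc n) ^ j * exp (b * x) \<le> 1/d * (x * exp (b' * x))"
      by (meson exp_ge_zero mult_right_mono order_trans)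
    then show "norm (real (Suc n) ^ j * exp (b * real (Suc n)) / \<gamma> (Suc n))
      \<le> 1/(b'-b) * (real (Suc n) * exp (b' * real (Suc n)) / \<gamma> (Suc n))"
      using gs[of n] unfolding x_def d_def
      by (metis (no_types, lifting) divide_right_mono less_eq_real_def times_divide_eq_left times_divide_eq_right norm_divide real_norm_def abs_of_nonneg exp_ge_zero
          divide_nonneg_pos mult_nonneg_nonneg of_nat_0_le_iff zero_le_power)
  qed
qed

lemma interior_S:
  assumes "b \<in> interior (S_set \<gamma>)"
  shows "\<exists>b'. b < b' \<and> b' \<in> S_set \<gamma>"
proof -
  obtain e where e: "e > 0" "ball b e \<subseteq> S_set \<gamma>" using assms by (meson mem_interior)
  then have "b + e/2 \<in> S_set \<gamma>" by (auto simp: dist_real_def)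
  then show ?thesis using e by (intro exI[of _ "b + e/2"]) auto
qed

lemma interior_S_iff:
  assumes gp: "\<And>m. m \<ge> 1 \<Longrightarrow> \<gamma> m > 0"
  shows "b \<in> interior (S_set \<gamma>) \<longleftrightarrow> (\<exists>b'. b < b' \<and> b' \<in> S_set \<gamma>)"
proof
  assume "\<exists>b'. b < b' \<and> b' \<in> S_set \<gamma>"
  then obtain b' where b': "b < b'" "b' \<in> S_set \<gamma>" by auto
  have "{..<b'} \<subseteq> S_set \<gamma>" using S_down[OF gp b'(2)] by auto
  then show "b \<in> interior (S_set \<gamma>)" using b'(1) by (meson interior_maximal lessThan_iff open_lessThan subsetD interior_subset
        interior_eq)
qed (rule interior_S)

lemma convex_S:
  assumes gp: "\<And>m. m \<ge> 1 \<Longrightarrow> \<gamma> m > 0"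
  shows "convex (S_set \<gamma>)"
  unfolding convex_def
proof (intro allI ballI impI)
  fix x y u v :: real assume xy: "x \<in> S_set \<gamma>" "y \<in> S_set \<gamma>" and uv: "0 \<le> u" "0 \<le> v" "u + v = 1"
  have "u * x + v * y \<le> max x y"
  proof -
    have "u * x + v * y \<le> u * max x y + v * max x y" using uv by (intro add_mono mult_left_mono) auto
    then show ?thesis using uv by (simp add: distrib_right[symmetric])
  qed
  then show "u *\<^sub>R x + v *\<^sub>R y \<in> S_set \<gamma>"
    using S_down[OF gp, where b'="max x y"] xy by (auto simp: max_def)
qed


section \<open>Closed form\<close>

definition phiA :: "('n::finite) entropic \<Rightarrow> real" where
  "phiA X = fst (snd X) - real CARD('n) / 2 * ln (- snd (snd (snd X)))"

definition betaF :: "('n::finite) entropic \<Rightarrow> real" where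
  "betaF X = fst (snd (snd X)) - (norm (fst X))\<^sup>2 / (4 * snd (snd (snd X)))"

definition Tm :: "(nat \<Rightarrow> real) \<Rightarrow> nat \<Rightarrow> ('n::finite) entropic \<Rightarrow> real" where
  "Tm \<gamma> m X = pi powr (real CARD('n) / 2) * exp (phiA X + real (Suc m) * betaF X) / \<gamma> (Suc m)"

lemma Sigma_term:
  fixes D :: "real^'n::finite"
  assumes C: "C < 0"
  shows "(LINT v|lborel. (real (Suc m) powr (real CARD('n) / 2) / \<gamma> (Suc m)) * exp (mu_dot (Suc m) v (D,A,B,C)))
     = Tm \<gamma> m (D,A,B,C)"
proof -
  define M where "M = real (Suc m)"
  define c where "c = M * (- C)"
  define n where "n = real CARD('n)"
  have M: "M > 0" by (simp add: M_def)
  have c: "c > 0" using C M by (simp add: c_def mult_pos_neg)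
  have mu: "mu_dot (Suc m) v (D,A,B,C) = (A + M*B) + (M*(v \<bullet> D) - c*(norm v)\<^sup>2)" for v
    by (simp add: mu_dot_def M_def c_def algebra_simps)
  have "(LINT v|lborel. (M powr (n / 2) / \<gamma> (Suc m)) * exp (mu_dot (Suc m) v (D,A,B,C)))
     = (LINT v|lborel. (M powr (n / 2) / \<gamma> (Suc m) * exp (A + M*B)) * exp (M*(v \<bullet> D) - c*(norm v)\<^sup>2))"
    unfolding mu by (simp add: exp_add mult.assoc)
  also have "\<dots> = (M powr (n / 2) / \<gamma> (Suc m) * exp (A + M*B)) * (sqrt (pi/c) ^ CARD('n) * exp (M\<^sup>2 * (norm D)\<^sup>2/(4*c)))"
    using gaussn_int[OF c, of M D] by simp
  also have "\<dots> = Tm \<gamma> m (D,A,B,C)"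
  proof -
    have s: "sqrt (pi/c) ^ CARD('n) = (pi/c) powr (n/2)"
    proof -
      have p: "(pi/c) powr (1/2) > 0" using c by simp
      have "sqrt (pi/c) ^ CARD('n) = ((pi/c) powr (1/2)) ^ CARD('n)" using c by (simp add: powr_half_sqrt)
      also have "\<dots> = ((pi/c) powr (1/2)) powr (real CARD('n))" using powr_realpow[OF p] by simp
      also have "\<dots> = (pi/c) powr (n/2)" by (simp add: powr_powr n_def)
      finally show ?thesis .
    qed
    have s2: "(pi/c) powr (n/2) = pi powr (n/2) / (M powr (n/2) * (-C) powr (n/2))"
    proof -
      have "(pi/c) powr (n/2) = pi powr (n/2) / c powr (n/2)" using c by (simp add: powr_divide)
      also have "c powr (n/2) = M powr (n/2) * (-C) powr (n/2)" unfolding c_def using M C powr_mult[of M "-C" "n/2"] by simp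
      finally show ?thesis .
    qed
    have s3: "(-C) powr (n/2) = exp (n/2 * ln (-C))" using C by (simp add: powr_def)
    have e: "M\<^sup>2 * (norm D)\<^sup>2/(4*c) = - M * (norm D)\<^sup>2 / (4 * C)"
      using M C by (simp add: c_def power2_eq_square field_simps)
    have "(M powr (n / 2) / \<gamma> (Suc m) * exp (A + M*B)) * (sqrt (pi/c) ^ CARD('n) * exp (M\<^sup>2 * (norm D)\<^sup>2/(4*c)))
       = pi powr (n/2) * (exp (A + M*B) * exp (- M * (norm D)\<^sup>2 / (4 * C)) / exp (n/2 * ln (-C))) / \<gamma> (Suc m)"
      unfolding s s2 s3 e using M by (simp add: field_simps)
    also have "\<dots> = pi powr (n/2) * exp (A - n/2 * ln (-C) + M * (B - (norm D)\<^sup>2 / (4 * C))) / \<gamma> (Suc m)"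
      by (simp add: exp_add[symmetric] exp_diff[symmetric] algebra_simps)
    finally show ?thesis by (simp add: Tm_def phiA_def betaF_def n_def M_def)
  qed
  finally show ?thesis by (simp add: M_def n_def)
qed

lemma Sigma_eq:
  fixes X :: "('n::finite) entropic"
  assumes "snd (snd (snd X)) < 0"
  shows "Sigma \<gamma> X = (\<Sum>m. Tm \<gamma> m X)"
proof -
  obtain D A B C where X: "X = (D,A,B,C)" by (cases X) auto
  show ?thesis unfolding Sigma_def X using assms X by (intro suminf_cong Sigma_term) simp
qed



lemma exp_gt_lin: fixes x :: real assumes "x \<noteq> 0" shows "1 + x < exp x"
proof (cases "1 + x/2 < 0")
  case True then show ?thesis using exp_gt_zero[of x] by linarith
next
  case False
  have "(1 + x/2)\<^sup>2 \<le> (exp (x/2))\<^sup>2"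
    using False exp_ge_add_one_self[of "x/2"] by (intro power_mono) auto
  also have "\<dots> = exp x" unfolding power2_eq_square exp_add[symmetric] by simp
  finally have "(1 + x/2)\<^sup>2 \<le> exp x" .
  moreover have "(1 + x/2)\<^sup>2 = 1 + x + x\<^sup>2/4" by (simp add: power2_eq_square field_simps)
  moreover have "x\<^sup>2 > 0" using assms by simp
  ultimately show ?thesis by linarith
qed
lemma exp_strict_convex:
  fixes p q t :: real assumes t: "0 < t" "t < 1" and pq: "p \<noteq> q"
  shows "exp ((1-t)*p + t*q) < (1-t) * exp p + t * exp q"
proof -
  define r where "r = (1-t)*p + t*q"
  have "p - r = t * (p - q)" "q - r = (1-t) * (q - p)" by (simp_all add: r_def algebra_simps)
  then have "p - r \<noteq> 0" "q - r \<noteq> 0" using t pq by auto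
  then have "1 + (p - r) < exp (p - r)" "1 + (q - r) < exp (q - r)" by (auto intro: exp_gt_lin)
  then have "exp r * (1 + (p - r)) < exp r * exp (p - r)" "exp r * (1 + (q - r)) < exp r * exp (q - r)"
    by auto
  then have a: "exp r * (1 + (p - r)) < exp p" "exp r * (1 + (q - r)) < exp q"
    by (simp_all add: mult_exp_exp)
  have "exp r = (1-t) * (exp r * (1 + (p - r))) + t * (exp r * (1 + (q - r)))"
    by (simp add: r_def algebra_simps)
  also have "\<dots> < (1-t) * exp p + t * exp q"
    using a t by (intro add_strict_mono mult_strict_left_mono) auto
  finally show ?thesis by (simp add: r_def)
qed

lemma exp_convex:
  fixes p q t :: real assumes t: "0 \<le> t" "t \<le> 1"
  shows "exp ((1-t)*p + t*q) \<le> (1-t) * exp p + t * exp q"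
proof (cases "p = q \<or> t = 0 \<or> t = 1")
  case True then show ?thesis by (auto simp: algebra_simps)
next
  case False then show ?thesis using exp_strict_convex[of t p q] t by auto
qed

lemma ln_strict_concave:
  fixes x y t :: real assumes t: "0 < t" "t < 1" and xy: "x > 0" "y > 0" "x \<noteq> y"
  shows "(1-t) * ln x + t * ln y < ln ((1-t)*x + t*y)"
proof -
  have "exp ((1-t) * ln x + t * ln y) < (1-t)*x + t*y"
    using exp_strict_convex[OF t, of "ln x" "ln y"] xy by auto
  moreover have "(1-t)*x + t*y > 0" using t xy by (intro add_pos_pos) auto
  ultimately show ?thesis by (metis exp_less_cancel_iff exp_ln)
qed

lemma ln_concave:
  fixes x y t :: real assumes t: "0 \<le> t" "t \<le> 1" and xy: "x > 0" "y > 0"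
  shows "(1-t) * ln x + t * ln y \<le> ln ((1-t)*x + t*y)"
proof (cases "x = y \<or> t = 0 \<or> t = 1")
  case True then show ?thesis by (auto simp: algebra_simps)
next
  case False then show ?thesis using ln_strict_concave[of t x y] t xy by auto
qed

lemma quad_ident:
  fixes p q :: "'a::real_inner" and a b :: real
  shows "(a+b) * (a * (norm p)\<^sup>2 + b * (norm q)\<^sup>2) - (norm (a *\<^sub>R p + b *\<^sub>R q))\<^sup>2 = a * b * (norm (p - q))\<^sup>2"
proof -
  have e1: "(norm (a *\<^sub>R p + b *\<^sub>R q))\<^sup>2 = a*a*(p \<bullet> p) + 2*a*b*(p \<bullet> q) + b*b*(q \<bullet> q)"
    unfolding power2_norm_eq_inner by (simp add: inner_add_left inner_add_right inner_commute[of q p] algebra_simps)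
  have e2: "(norm (p - q))\<^sup>2 = p \<bullet> p - 2*(p \<bullet> q) + q \<bullet> q"
    unfolding power2_norm_eq_inner by (simp add: inner_diff_left inner_diff_right inner_commute[of q p])
  show ?thesis unfolding e1 e2 by (simp add: power2_norm_eq_inner algebra_simps)
qed

lemma persp_convex:
  fixes D1 D2 :: "'a::real_inner" and c1 c2 t :: real
  assumes c: "c1 > 0" "c2 > 0" and t: "0 \<le> t" "t \<le> 1"
  shows "(norm ((1-t) *\<^sub>R D1 + t *\<^sub>R D2))\<^sup>2 / ((1-t)*c1 + t*c2) \<le> (1-t) * ((norm D1)\<^sup>2 / c1) + t * ((norm D2)\<^sup>2 / c2)"
proof -
  define a where "a = (1-t)*c1"
  define b where "b = t*c2"
  define p where "p = (1/c1) *\<^sub>R D1"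
  define q where "q = (1/c2) *\<^sub>R D2"
  have ab1: "a \<ge> 0" "b \<ge> 0" using c t unfolding a_def b_def by auto
  have ab: "a \<ge> 0" "b \<ge> 0" "a + b > 0"
  proof -
    show "a \<ge> 0" "b \<ge> 0" by (fact ab1)+
    show "a + b > 0"
    proof (cases "t = 1")
      case True then show ?thesis using c by (simp add: a_def b_def)
    next
      case False then have "a > 0" using c t by (simp add: a_def)
      then show ?thesis using ab1 by linarith
    qed
  qed
  have D: "(1-t) *\<^sub>R D1 + t *\<^sub>R D2 = a *\<^sub>R p + b *\<^sub>R q" using c by (simp add: a_def b_def p_def q_def)
  have R: "(1-t) * ((norm D1)\<^sup>2 / c1) + t * ((norm D2)\<^sup>2 / c2) = a * (norm p)\<^sup>2 + b * (norm q)\<^sup>2"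
    using c by (simp add: a_def b_def p_def q_def power2_eq_square field_simps)
  have "(norm (a *\<^sub>R p + b *\<^sub>R q))\<^sup>2 \<le> (a+b) * (a * (norm p)\<^sup>2 + b * (norm q)\<^sup>2)"
    using quad_ident[of a b p q] ab by (smt (verit) mult_nonneg_nonneg zero_le_power2)
  then show ?thesis unfolding D R using ab by (simp add: divide_le_eq mult.commute a_def b_def)
qed


lemma comb_comps:
  fixes X Y :: "('n::finite) entropic"
  shows "fst ((1-t) *\<^sub>R X + t *\<^sub>R Y) = (1-t) *\<^sub>R fst X + t *\<^sub>R fst Y"
    "fst (snd ((1-t) *\<^sub>R X + t *\<^sub>R Y)) = (1-t) * fst (snd X) + t * fst (snd Y)"
    "fst (snd (snd ((1-t) *\<^sub>R X + t *\<^sub>R Y))) = (1-t) * fst (snd (snd X)) + t * fst (snd (snd Y))"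
    "snd (snd (snd ((1-t) *\<^sub>R X + t *\<^sub>R Y))) = (1-t) * snd (snd (snd X)) + t * snd (snd (snd Y))"
  by simp_all

lemma phiA_convex:
  fixes X Y :: "('n::finite) entropic"
  assumes X: "snd (snd (snd X)) < 0" and Y: "snd (snd (snd Y)) < 0" and t: "0 \<le> t" "t \<le> 1"
  shows "phiA ((1-t) *\<^sub>R X + t *\<^sub>R Y) \<le> (1-t) * phiA X + t * phiA Y"
proof -
  define c1 where "c1 = - snd (snd (snd X))"
  define c2 where "c2 = - snd (snd (snd Y))"
  define k where "k = real CARD('n) / 2"
  have c: "c1 > 0" "c2 > 0" using X Y by (auto simp: c1_def c2_def)
  have "(1-t) * ln c1 + t * ln c2 \<le> ln ((1-t)*c1 + t*c2)" by (rule ln_concave[OF t c])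
  then have m: "k * ((1-t) * ln c1 + t * ln c2) \<le> k * ln ((1-t)*c1 + t*c2)"
    by (intro mult_left_mono) (auto simp: k_def)
  have cz: "- snd (snd (snd ((1-t) *\<^sub>R X + t *\<^sub>R Y))) = (1-t)*c1 + t*c2"
    by (simp add: c1_def c2_def algebra_simps)
  have e1: "phiA ((1-t) *\<^sub>R X + t *\<^sub>R Y) = ((1-t) * fst (snd X) + t * fst (snd Y)) - k * ln ((1-t)*c1 + t*c2)"
    unfolding phiA_def cz comb_comps(2) k_def ..
  have e2: "(1-t) * phiA X + t * phiA Y = ((1-t) * fst (snd X) + t * fst (snd Y)) - k * ((1-t) * ln c1 + t * ln c2)"
    unfolding phiA_def c1_def c2_def k_def by (simp add: field_simps)
  show ?thesis unfolding e1 e2 using m by linarith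
qed

lemma betaF_convex:
  fixes X Y :: "('n::finite) entropic"
  assumes X: "snd (snd (snd X)) < 0" and Y: "snd (snd (snd Y)) < 0" and t: "0 \<le> t" "t \<le> 1"
  shows "betaF ((1-t) *\<^sub>R X + t *\<^sub>R Y) \<le> (1-t) * betaF X + t * betaF Y"
proof -
  define c1 where "c1 = - snd (snd (snd X))"
  define c2 where "c2 = - snd (snd (snd Y))"
  have c: "c1 > 0" "c2 > 0" using X Y by (auto simp: c1_def c2_def)
  have p: "(norm ((1-t) *\<^sub>R fst X + t *\<^sub>R fst Y))\<^sup>2 / ((1-t)*c1 + t*c2) \<le> (1-t) * ((norm (fst X))\<^sup>2 / c1) + t * ((norm (fst Y))\<^sup>2 / c2)"
    by (rule persp_convex[OF c t])
  have bf: "betaF W = fst (snd (snd W)) + (norm (fst W))\<^sup>2 / (- snd (snd (snd W))) / 4" for W :: "'n entropic"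
    by (simp add: betaF_def)
  have cz: "- snd (snd (snd ((1-t) *\<^sub>R X + t *\<^sub>R Y))) = (1-t)*c1 + t*c2"
    by (simp add: c1_def c2_def algebra_simps)
  have bX: "betaF X = fst (snd (snd X)) + (norm (fst X))\<^sup>2 / c1 / 4" unfolding bf c1_def ..
  have bY: "betaF Y = fst (snd (snd Y)) + (norm (fst Y))\<^sup>2 / c2 / 4" unfolding bf c2_def ..
  have p4: "(norm ((1-t) *\<^sub>R fst X + t *\<^sub>R fst Y))\<^sup>2 / ((1-t)*c1 + t*c2) / 4 \<le> ((1-t) * ((norm (fst X))\<^sup>2 / c1) + t * ((norm (fst Y))\<^sup>2 / c2)) / 4"
    using divide_right_mono[OF p, of 4] by simp
  have e1: "betaF ((1-t) *\<^sub>R X + t *\<^sub>R Y) = ((1-t) * fst (snd (snd X)) + t * fst (snd (snd Y))) + (norm ((1-t) *\<^sub>R fst X + t *\<^sub>R fst Y))\<^sup>2 / ((1-t)*c1 + t*c2) / 4"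
    unfolding bf[of "(1-t) *\<^sub>R X + t *\<^sub>R Y"] cz comb_comps(1,3) ..
  have e2: "(1-t) * betaF X + t * betaF Y = ((1-t) * fst (snd (snd X)) + t * fst (snd (snd Y))) + ((1-t) * ((norm (fst X))\<^sup>2 / c1) + t * ((norm (fst Y))\<^sup>2 / c2)) / 4"
    unfolding bX bY using c by (simp add: field_simps)
  show ?thesis unfolding e1 e2 using p4 by linarith
qed


lemma P_convex:
  fixes X Y :: "('n::finite) entropic"
  assumes X: "snd (snd (snd X)) < 0" and Y: "snd (snd (snd Y)) < 0" and t: "0 \<le> t" "t \<le> 1" and M: "M \<ge> 0"
  shows "phiA ((1-t) *\<^sub>R X + t *\<^sub>R Y) + M * betaF ((1-t) *\<^sub>R X + t *\<^sub>R Y)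
     \<le> (1-t) * (phiA X + M * betaF X) + t * (phiA Y + M * betaF Y)"
proof -
  have "M * betaF ((1-t) *\<^sub>R X + t *\<^sub>R Y) \<le> M * ((1-t) * betaF X + t * betaF Y)"
    using betaF_convex[OF X Y t] M by (rule mult_left_mono)
  then show ?thesis using phiA_convex[OF X Y t] by (simp add: algebra_simps)
qed

lemma key_strict:
  fixes X Y :: "('n::finite) entropic"
  assumes X: "snd (snd (snd X)) < 0" and Y: "snd (snd (snd Y)) < 0" and t: "0 < t" "t < 1" and XY: "X \<noteq> Y"
  shows "\<exists>M\<in>{1,2::real}. exp (phiA ((1-t) *\<^sub>R X + t *\<^sub>R Y) + M * betaF ((1-t) *\<^sub>R X + t *\<^sub>R Y))
     < (1-t) * exp (phiA X + M * betaF X) + t * exp (phiA Y + M * betaF Y)"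
proof (rule ccontr)
  define Z where "Z = (1-t) *\<^sub>R X + t *\<^sub>R Y"
  define P where "P M W = phiA W + M * betaF W" for M :: real and W :: "'n entropic"
  assume "\<not> ?thesis"
  then have ge: "exp (P M Z) \<ge> (1-t) * exp (P M X) + t * exp (P M Y)" if "M \<in> {1,2}" for M
    using that unfolding P_def Z_def by auto
  have flat: "P M Z = P M X \<and> P M X = P M Y" if M: "M \<in> {1,2}" for M
  proof -
    have M0: "M \<ge> 0" using M by auto
    have c: "P M Z \<le> (1-t) * P M X + t * P M Y"
      using P_convex[OF X Y _ _ M0, of t] t unfolding P_def Z_def by auto
    have e1: "exp (P M Z) \<le> exp ((1-t) * P M X + t * P M Y)" using c by simp
    have xy: "P M X = P M Y"
    proof (rule ccontr)
      assume "P M X \<noteq> P M Y"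
      then have "exp ((1-t) * P M X + t * P M Y) < (1-t) * exp (P M X) + t * exp (P M Y)"
        by (rule exp_strict_convex[OF t])
      then show False using ge[OF M] e1 by linarith
    qed
    have "exp (P M Z) \<ge> exp (P M X)" using ge[OF M] xy by (simp add: algebra_simps)
    then have "P M Z \<ge> P M X" by simp
    moreover have "P M Z \<le> P M X" using c xy by (simp add: algebra_simps)
    ultimately show ?thesis using xy by simp
  qed
  have f1: "P 1 Z = P 1 X" "P 1 X = P 1 Y" and f2: "P 2 Z = P 2 X" "P 2 X = P 2 Y"
    using flat[of 1] flat[of 2] by auto
  have bZ: "betaF Z = betaF X" and bXY: "betaF X = betaF Y"
    using f1 f2 unfolding P_def by linarith+
  have aZ: "phiA Z = phiA X" and aXY: "phiA X = phiA Y"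
    using f1 f2 unfolding P_def by linarith+
  define c1 where "c1 = - snd (snd (snd X))"
  define c2 where "c2 = - snd (snd (snd Y))"
  define k where "k = real CARD('n) / 2"
  have k: "k > 0" by (simp add: k_def)
  have c: "c1 > 0" "c2 > 0" using X Y by (auto simp: c1_def c2_def)
  have cz: "- snd (snd (snd Z)) = (1-t)*c1 + t*c2"
    by (simp add: Z_def c1_def c2_def algebra_simps)
  have e1: "phiA Z = ((1-t) * fst (snd X) + t * fst (snd Y)) - k * ln ((1-t)*c1 + t*c2)"
    unfolding phiA_def cz Z_def[symmetric] by (simp add: Z_def k_def)
  have e2: "(1-t) * phiA X + t * phiA Y = ((1-t) * fst (snd X) + t * fst (snd Y)) - k * ((1-t) * ln c1 + t * ln c2)"
    unfolding phiA_def c1_def c2_def k_def by (simp add: field_simps)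
  have "(1-t) * phiA X + t * phiA Y = phiA Z" using aZ aXY by (simp add: algebra_simps)
  then have "k * ((1-t) * ln c1 + t * ln c2) = k * ln ((1-t)*c1 + t*c2)" unfolding e1 e2 by linarith
  then have lneq: "(1-t) * ln c1 + t * ln c2 = ln ((1-t)*c1 + t*c2)" using k by simp
  have C: "c1 = c2"
  proof (rule ccontr)
    assume "c1 \<noteq> c2"
    then show False using ln_strict_concave[OF t c] lneq by simp
  qed
  then have C': "snd (snd (snd X)) = snd (snd (snd Y))" by (simp add: c1_def c2_def)
  have A: "fst (snd X) = fst (snd Y)" using aXY C' by (simp add: phiA_def)
  have bf: "betaF W = fst (snd (snd W)) + (norm (fst W))\<^sup>2 / (- snd (snd (snd W))) / 4" for W :: "'n entropic"
    by (simp add: betaF_def)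
  have cz1: "- snd (snd (snd Z)) = c1" using cz C by (simp add: algebra_simps)
  have "(1-t) * betaF X + t * betaF Y = betaF Z" using bZ bXY by (simp add: algebra_simps)
  then have "(1-t) * (fst (snd (snd X)) + (norm (fst X))\<^sup>2 / c1 / 4) + t * (fst (snd (snd Y)) + (norm (fst Y))\<^sup>2 / c1 / 4)
     = ((1-t) * fst (snd (snd X)) + t * fst (snd (snd Y))) + (norm ((1-t) *\<^sub>R fst X + t *\<^sub>R fst Y))\<^sup>2 / c1 / 4"
    unfolding bf[of Z] cz1 unfolding bf c1_def[symmetric] C'[symmetric] by (simp add: Z_def)
  moreover define u where "u = (norm (fst X))\<^sup>2"
  moreover define w where "w = (norm (fst Y))\<^sup>2"
  moreover define r where "r = (norm ((1-t) *\<^sub>R fst X + t *\<^sub>R fst Y))\<^sup>2"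
  ultimately have "(1-t) * (fst (snd (snd X)) + u / c1 / 4) + t * (fst (snd (snd Y)) + w / c1 / 4)
     = ((1-t) * fst (snd (snd X)) + t * fst (snd (snd Y))) + r / c1 / 4" by simp
  moreover define g where "g = 1 / c1 / 4"
  ultimately have "(1-t) * (fst (snd (snd X)) + u * g) + t * (fst (snd (snd Y)) + w * g)
     = ((1-t) * fst (snd (snd X)) + t * fst (snd (snd Y))) + r * g" by simp
  then have "((1-t) * u + t * w) * g = r * g" by algebra
  moreover have "g \<noteq> 0" using c by (simp add: g_def)
  ultimately have "(1-t) * u + t * w = r" by simp
  then have nq: "(1-t) * (norm (fst X))\<^sup>2 + t * (norm (fst Y))\<^sup>2 = (norm ((1-t) *\<^sub>R fst X + t *\<^sub>R fst Y))\<^sup>2"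
    using c unfolding u_def[symmetric] w_def[symmetric] r_def[symmetric] by (simp add: field_simps)
  have "((1-t)+t) * ((1-t) * (norm (fst X))\<^sup>2 + t * (norm (fst Y))\<^sup>2) - (norm ((1-t) *\<^sub>R fst X + t *\<^sub>R fst Y))\<^sup>2
     = (1-t) * t * (norm (fst X - fst Y))\<^sup>2" by (rule quad_ident)
  then have "(1-t) * t * (norm (fst X - fst Y))\<^sup>2 = 0" using nq by simp
  then have D: "fst X = fst Y" using t by simp
  have B: "fst (snd (snd X)) = fst (snd (snd Y))" using bXY D C' by (simp add: betaF_def)
  have "X = Y" using D A B C' by (simp add: prod_eq_iff)
  then show False using XY by simp
qed


lemma Tm_alt: "Tm \<gamma> m W = (pi powr (real CARD('n) / 2) * exp (phiA W)) * (real (Suc m) ^ 0 * exp (betaF W * real (Suc m)) / \<gamma> (Suc m))"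
  for W :: "('n::finite) entropic"
  by (simp add: Tm_def exp_add mult.commute)

lemma Tm_summable:
  fixes W :: "('n::finite) entropic"
  assumes gp: "\<And>m. m \<ge> 1 \<Longrightarrow> \<gamma> m > 0" and b: "betaF W \<in> S_set \<gamma>"
  shows "summable (\<lambda>m. Tm \<gamma> m W)"
  unfolding Tm_alt by (intro summable_mult summable_pow_le[OF gp b]) auto

lemma domain_alt: "entropic_domain \<gamma> = {X. snd (snd (snd X)) < 0 \<and> betaF X \<in> S_set \<gamma>}"
  by (simp add: entropic_domain_def betaF_def)

lemma domain_convex:
  assumes gp: "\<And>m. m \<ge> 1 \<Longrightarrow> \<gamma> m > 0"
  shows "convex (entropic_domain \<gamma> :: ('n::finite) entropic set)"
  unfolding convex_alt domain_alt
proof (intro ballI allI impI)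
  fix X Y :: "'n entropic" and t :: real
  assume X: "X \<in> {X. snd (snd (snd X)) < 0 \<and> betaF X \<in> S_set \<gamma>}"
     and Y: "Y \<in> {X. snd (snd (snd X)) < 0 \<and> betaF X \<in> S_set \<gamma>}" and t: "0 \<le> t \<and> t \<le> 1"
  have c: "snd (snd (snd ((1-t) *\<^sub>R X + t *\<^sub>R Y))) < 0"
  proof (cases "t = 0")
    case True then show ?thesis using X by simp
  next
    case False then show ?thesis using X Y t
      by (simp add: add_nonpos_neg mult_nonneg_nonpos less_imp_le mult_pos_neg)
  qed
  have "(1-t) *\<^sub>R betaF X + t *\<^sub>R betaF Y \<in> S_set \<gamma>"
    using convex_S[of \<gamma>, OF gp] X Y t unfolding convex_alt by blast
  then have "(1-t) * betaF X + t * betaF Y \<in> S_set \<gamma>" by simp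
  moreover have "betaF ((1-t) *\<^sub>R X + t *\<^sub>R Y) \<le> (1-t) * betaF X + t * betaF Y"
    using betaF_convex[of X Y t] X Y t by auto
  ultimately have "betaF ((1-t) *\<^sub>R X + t *\<^sub>R Y) \<in> S_set \<gamma>" using S_down[of \<gamma>, OF gp] by blast
  then show "(1-t) *\<^sub>R X + t *\<^sub>R Y \<in> {X. snd (snd (snd X)) < 0 \<and> betaF X \<in> S_set \<gamma>}" using c by simp
qed

lemma Sigma_strict:
  assumes gp: "\<And>m. m \<ge> 1 \<Longrightarrow> \<gamma> m > 0"
  shows "strict_convex_on (entropic_domain \<gamma> :: ('n::finite) entropic set) (Sigma \<gamma>)"
  unfolding strict_convex_on_def
proof (intro conjI domain_convex[OF gp] ballI allI impI)
  fix X Y :: "'n entropic" and t :: real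
  assume X: "X \<in> entropic_domain \<gamma>" and Y: "Y \<in> entropic_domain \<gamma>" and t: "X \<noteq> Y \<and> 0 < t \<and> t < 1"
  define Z where "Z = (1-t) *\<^sub>R X + t *\<^sub>R Y"
  have Zd: "Z \<in> entropic_domain \<gamma>" using domain_convex[of \<gamma>, OF gp] X Y t unfolding convex_alt Z_def by auto
  have Xc: "snd (snd (snd X)) < 0" "betaF X \<in> S_set \<gamma>" using X by (auto simp: domain_alt)
  have Yc: "snd (snd (snd Y)) < 0" "betaF Y \<in> S_set \<gamma>" using Y by (auto simp: domain_alt)
  have Zc: "snd (snd (snd Z)) < 0" "betaF Z \<in> S_set \<gamma>" using Zd by (auto simp: domain_alt)
  define K where "K = pi powr (real CARD('n) / 2)"
  have K: "K > 0" by (simp add: K_def)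
  have gs: "\<gamma> (Suc m) > 0" for m using gp[of "Suc m"] by simp
  have TmP: "Tm \<gamma> m W = K * exp (phiA W + real (Suc m) * betaF W) / \<gamma> (Suc m)" for m and W :: "'n entropic"
    by (simp add: Tm_def K_def)
  have le: "Tm \<gamma> m Z \<le> (1-t) * Tm \<gamma> m X + t * Tm \<gamma> m Y" for m
  proof -
    have "phiA Z + real (Suc m) * betaF Z \<le> (1-t) * (phiA X + real (Suc m) * betaF X) + t * (phiA Y + real (Suc m) * betaF Y)"
      unfolding Z_def by (rule P_convex[OF Xc(1) Yc(1)]) (use t in auto)
    then have "exp (phiA Z + real (Suc m) * betaF Z) \<le> exp ((1-t) * (phiA X + real (Suc m) * betaF X) + t * (phiA Y + real (Suc m) * betaF Y))"
      by simp
    also have "\<dots> \<le> (1-t) * exp (phiA X + real (Suc m) * betaF X) + t * exp (phiA Y + real (Suc m) * betaF Y)"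
      by (rule exp_convex) (use t in auto)
    finally have "K * exp (phiA Z + real (Suc m) * betaF Z) / \<gamma> (Suc m) \<le> K * ((1-t) * exp (phiA X + real (Suc m) * betaF X) + t * exp (phiA Y + real (Suc m) * betaF Y)) / \<gamma> (Suc m)"
      using K gs[of m] by (intro divide_right_mono mult_left_mono) auto
    then show ?thesis unfolding TmP using gs[of m] by (simp add: field_simps)
  qed
  obtain M where M: "M \<in> {1,2::real}" and Ms: "exp (phiA Z + M * betaF Z) < (1-t) * exp (phiA X + M * betaF X) + t * exp (phiA Y + M * betaF Y)"
    using key_strict[OF Xc(1) Yc(1)] t unfolding Z_def by blast
  obtain i where i: "M = real (Suc i)" using M by (auto intro: exI[of _ 0] exI[of _ 1])
  have lt: "Tm \<gamma> i Z < (1-t) * Tm \<gamma> i X + t * Tm \<gamma> i Y"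
  proof -
    have "K * exp (phiA Z + M * betaF Z) / \<gamma> (Suc i) < K * ((1-t) * exp (phiA X + M * betaF X) + t * exp (phiA Y + M * betaF Y)) / \<gamma> (Suc i)"
      using K gs[of i] Ms by (intro divide_strict_right_mono mult_strict_left_mono) auto
    then show ?thesis unfolding TmP i[symmetric] using gs[of i] by (simp add: field_simps)
  qed
  have sX: "summable (\<lambda>m. Tm \<gamma> m X)" by (rule Tm_summable[OF gp Xc(2)])
  have sY: "summable (\<lambda>m. Tm \<gamma> m Y)" by (rule Tm_summable[OF gp Yc(2)])
  have sZ: "summable (\<lambda>m. Tm \<gamma> m Z)" by (rule Tm_summable[OF gp Zc(2)])
  have sD: "summable (\<lambda>m. (1-t) * Tm \<gamma> m X + t * Tm \<gamma> m Y - Tm \<gamma> m Z)"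
    by (intro summable_diff summable_add summable_mult sX sY sZ)
  have "0 < (\<Sum>m. (1-t) * Tm \<gamma> m X + t * Tm \<gamma> m Y - Tm \<gamma> m Z)"
    using sD le lt by (intro suminf_pos2[of _ i]) auto
  also have "(\<Sum>m. (1-t) * Tm \<gamma> m X + t * Tm \<gamma> m Y - Tm \<gamma> m Z) = (1-t) * (\<Sum>m. Tm \<gamma> m X) + t * (\<Sum>m. Tm \<gamma> m Y) - (\<Sum>m. Tm \<gamma> m Z)"
    by (intro sums_unique[symmetric] sums_diff sums_add sums_mult summable_sums sX sY sZ)
  finally have "(\<Sum>m. Tm \<gamma> m Z) < (1-t) * (\<Sum>m. Tm \<gamma> m X) + t * (\<Sum>m. Tm \<gamma> m Y)" by simp
  then show "Sigma \<gamma> ((1 - t) *\<^sub>R X + t *\<^sub>R Y) < (1 - t) * Sigma \<gamma> X + t * Sigma \<gamma> Y"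
    using Sigma_eq[OF Xc(1), of \<gamma>] Sigma_eq[OF Yc(1), of \<gamma>] Sigma_eq[OF Zc(1), of \<gamma>] by (simp add: Z_def)
qed



definition Fk :: "(nat \<Rightarrow> real) \<Rightarrow> nat \<Rightarrow> real \<Rightarrow> real" where
  "Fk \<gamma> k b = (\<Sum>m. real (Suc m) ^ k * exp (b * real (Suc m)) / \<gamma> (Suc m))"

lemma Fk_summable:
  assumes gp: "\<And>m. m \<ge> 1 \<Longrightarrow> \<gamma> m > 0" and b: "b \<in> interior (S_set \<gamma>)" and k: "k \<le> 2"
  shows "summable (\<lambda>m. real (Suc m) ^ k * exp (b * real (Suc m)) / \<gamma> (Suc m))"
proof -
  obtain b' where "b < b'" "b' \<in> S_set \<gamma>" using interior_S[OF b] by auto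
  then show ?thesis using summable_pow2[of \<gamma>, OF gp _ _ k] by blast
qed

lemma Fk_pos:
  assumes gp: "\<And>m. m \<ge> 1 \<Longrightarrow> \<gamma> m > 0" and b: "b \<in> interior (S_set \<gamma>)" and k: "k \<le> 2"
  shows "Fk \<gamma> k b > 0"
  unfolding Fk_def using gp[of "Suc _"] by (intro suminf_pos Fk_summable[OF gp b k]) auto

lemma Fk_deriv:
  assumes gp: "\<And>m. m \<ge> 1 \<Longrightarrow> \<gamma> m > 0" and b: "b \<in> interior (S_set \<gamma>)" and k: "k \<le> 1"
  shows "(Fk \<gamma> k has_real_derivative Fk \<gamma> (Suc k) b) (at b)"
proof -
  obtain b' where b': "b < b'" "b' \<in> S_set \<gamma>" using interior_S[OF b] by auto
  define d where "d = (b' - b) / 2"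
  have d: "d > 0" "b + d < b'" using b' by (auto simp: d_def field_simps)
  define f where "f n x = real (Suc n) ^ k * exp (x * real (Suc n)) / \<gamma> (Suc n)" for n x
  define f' where "f' n x = real (Suc n) ^ Suc k * exp (x * real (Suc n)) / \<gamma> (Suc n)" for n x
  have gs: "\<gamma> (Suc m) > 0" for m using gp[of "Suc m"] by simp
  have "((\<lambda>x. \<Sum>n. f n x) has_field_derivative (\<Sum>n. f' n b)) (at b)"
  proof (rule has_field_derivative_series'(2)[of "{b-d..b+d}"])
    show "convex {b-d..b+d}" by (rule convex_real_interval)
    show "(f n has_field_derivative f' n x) (at x within {b-d..b+d})" for n x
      unfolding f_def f'_def using gs[of n] by (auto intro!: derivative_eq_intros)
    have "uniform_limit {b-d..b+d} (\<lambda>n x. \<Sum>i<n. f' i x) (\<lambda>x. \<Sum>i. f' i x) sequentially"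
    proof (rule Weierstrass_m_test)
      show "summable (\<lambda>n. f' n (b+d))" unfolding f'_def
        by (rule summable_pow2[of \<gamma>, OF gp b'(2) d(2)]) (use k in auto)
      fix n x assume x: "x \<in> {b-d..b+d}"
      have "exp (x * real (Suc n)) \<le> exp ((b+d) * real (Suc n))" using x by (auto intro: mult_right_mono)
      then show "norm (f' n x) \<le> f' n (b+d)" unfolding f'_def using gs[of n]
        by (auto simp: abs_mult intro!: divide_right_mono mult_left_mono)
    qed
    then show "uniformly_convergent_on {b-d..b+d} (\<lambda>n x. \<Sum>i<n. f' i x)"
      unfolding uniformly_convergent_on_def by blast
    show "b \<in> {b-d..b+d}" using d by auto
    show "summable (\<lambda>n. f n b)" unfolding f_def by (rule Fk_summable[OF gp b]) (use k in auto)
    show "b \<in> interior {b-d..b+d}" using d by auto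
  qed
  moreover have "Fk \<gamma> k = (\<lambda>x. \<Sum>n. f n x)" by (auto simp: Fk_def f_def fun_eq_iff)
  moreover have "Fk \<gamma> (Suc k) b = (\<Sum>n. f' n b)" by (simp add: Fk_def f'_def)
  ultimately show ?thesis by simp
qed

lemma Fk_quad:
  assumes gp: "\<And>m. m \<ge> 1 \<Longrightarrow> \<gamma> m > 0" and b: "b \<in> interior (S_set \<gamma>)" and uw: "u \<noteq> 0 \<or> w \<noteq> 0"
  shows "Fk \<gamma> 0 b * u\<^sup>2 + 2 * Fk \<gamma> 1 b * u * w + Fk \<gamma> 2 b * w\<^sup>2 > 0"
proof -
  define e where "e m = exp (b * real (Suc m)) / \<gamma> (Suc m)" for m
  have gs: "\<gamma> (Suc m) > 0" for m using gp[of "Suc m"] by simp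
  have e: "e m > 0" for m using gs[of m] by (simp add: e_def)
  have s: "summable (\<lambda>m. real (Suc m) ^ k * e m)" if "k \<le> 2" for k
    using Fk_summable[OF gp b that] by (simp add: e_def)
  have F: "Fk \<gamma> k b = (\<Sum>m. real (Suc m) ^ k * e m)" for k by (simp add: Fk_def e_def)
  have SS: "(\<lambda>m. e m * (u + real (Suc m) * w)\<^sup>2) sums (Fk \<gamma> 0 b * u\<^sup>2 + 2 * Fk \<gamma> 1 b * u * w + Fk \<gamma> 2 b * w\<^sup>2)"
  proof -
    have "(\<lambda>m. (real (Suc m) ^ 0 * e m) * u\<^sup>2 + (real (Suc m) ^ 1 * e m) * (2 * u * w) + (real (Suc m) ^ 2 * e m) * w\<^sup>2)
        sums (Fk \<gamma> 0 b * u\<^sup>2 + Fk \<gamma> 1 b * (2 * u * w) + Fk \<gamma> 2 b * w\<^sup>2)"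
      unfolding F by (intro sums_add sums_mult2 summable_sums s) auto
    then show ?thesis by (simp add: power2_eq_square algebra_simps)
  qed
  have "0 < (\<Sum>m. e m * (u + real (Suc m) * w)\<^sup>2)"
  proof -
    have "u + real (Suc 0) * w \<noteq> 0 \<or> u + real (Suc 1) * w \<noteq> 0" using uw by auto
    then obtain i where "u + real (Suc i) * w \<noteq> 0" by blast
    then have "0 < e i * (u + real (Suc i) * w)\<^sup>2" using e[of i] by simp
    moreover have "summable (\<lambda>m. e m * (u + real (Suc m) * w)\<^sup>2)" using SS by (rule sums_summable)
    moreover have "0 \<le> e n * (u + real (Suc n) * w)\<^sup>2" for n using e[of n] by simp
    ultimately show ?thesis by (intro suminf_pos2[of _ i])
  qed
  then show ?thesis using SS by (simp add: sums_iff)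
qed


definition ga :: "('n::finite) entropic \<Rightarrow> 'n entropic" where
  "ga X = (0, 1, 0, - real CARD('n) / (2 * snd (snd (snd X))))"

definition gb :: "('n::finite) entropic \<Rightarrow> 'n entropic" where
  "gb X = (- (1 / (2 * snd (snd (snd X)))) *\<^sub>R fst X, 0, 1, (fst X \<bullet> fst X) / (4 * (snd (snd (snd X)))\<^sup>2))"

definition dga :: "('n::finite) entropic \<Rightarrow> 'n entropic \<Rightarrow> 'n entropic" where
  "dga X h = (0, 0, 0, real CARD('n) * snd (snd (snd h)) / (2 * (snd (snd (snd X)))\<^sup>2))"

definition dgb :: "('n::finite) entropic \<Rightarrow> 'n entropic \<Rightarrow> 'n entropic" where
  "dgb X h = (- (1 / (2 * snd (snd (snd X)))) *\<^sub>R fst h + (snd (snd (snd h)) / (2 * (snd (snd (snd X)))\<^sup>2)) *\<^sub>R fst X, 0, 0,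
     (fst X \<bullet> fst h) / (2 * (snd (snd (snd X)))\<^sup>2) - (fst X \<bullet> fst X) * snd (snd (snd h)) / (2 * (snd (snd (snd X)))^3))"

lemma ga_inner: "ga X \<bullet> h = fst (snd h) - real CARD('n) / (2 * snd (snd (snd X))) * snd (snd (snd h))"
  for X h :: "('n::finite) entropic"
  by (simp add: ga_def inner_prod_def)

lemma gb_inner: "gb X \<bullet> h = - (fst X \<bullet> fst h) / (2 * snd (snd (snd X))) + fst (snd (snd h)) + (fst X \<bullet> fst X) / (4 * (snd (snd (snd X)))\<^sup>2) * snd (snd (snd h))"
  for X h :: "('n::finite) entropic"
  by (simp add: gb_def inner_prod_def)

lemma phiA_deriv:
  fixes X :: "('n::finite) entropic"
  assumes C: "snd (snd (snd X)) < 0"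
  shows "(phiA has_derivative (\<lambda>h. ga X \<bullet> h)) (at X)"
  unfolding phiA_def[abs_def] ga_inner using C
  by (auto intro!: derivative_eq_intros simp: field_simps)

lemma betaF_deriv:
  fixes X :: "('n::finite) entropic"
  assumes C: "snd (snd (snd X)) < 0"
  shows "(betaF has_derivative (\<lambda>h. gb X \<bullet> h)) (at X)"
proof -
  have e: "betaF = (\<lambda>X. fst (snd (snd X)) - (fst X \<bullet> fst X) / (4 * snd (snd (snd X))))"
    by (auto simp: betaF_def power2_norm_eq_inner fun_eq_iff)
  show ?thesis unfolding e gb_inner using C
    by (auto intro!: derivative_eq_intros simp: field_simps power2_eq_square inner_commute)
qed

lemma ga_deriv:
  fixes X :: "('n::finite) entropic"
  assumes C: "snd (snd (snd X)) < 0"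
  shows "(ga has_derivative dga X) (at X)"
  unfolding ga_def[abs_def] dga_def[abs_def] using C
  by (auto intro!: derivative_eq_intros simp: field_simps power2_eq_square)

lemma gb_deriv:
  fixes X :: "('n::finite) entropic"
  assumes C: "snd (snd (snd X)) < 0"
  shows "(gb has_derivative dgb X) (at X)"
  unfolding gb_def[abs_def] dgb_def[abs_def] using C
  by (auto intro!: derivative_eq_intros simp: fun_eq_iff field_simps power2_eq_square power3_eq_cube inner_commute)


definition sK :: "('n::finite) entropic \<Rightarrow> real" where
  "sK X = pi powr (real CARD('n) / 2) * exp (phiA X)"

definition VV :: "(nat \<Rightarrow> real) \<Rightarrow> ('n::finite) entropic \<Rightarrow> 'n entropic" where
  "VV \<gamma> X = Fk \<gamma> 0 (betaF X) *\<^sub>R ga X + Fk \<gamma> 1 (betaF X) *\<^sub>R gb X"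

definition GG :: "(nat \<Rightarrow> real) \<Rightarrow> ('n::finite) entropic \<Rightarrow> 'n entropic" where
  "GG \<gamma> X = sK X *\<^sub>R VV \<gamma> X"

definition dVV :: "(nat \<Rightarrow> real) \<Rightarrow> ('n::finite) entropic \<Rightarrow> 'n entropic \<Rightarrow> 'n entropic" where
  "dVV \<gamma> X h = (Fk \<gamma> 0 (betaF X) *\<^sub>R dga X h + (Fk \<gamma> 1 (betaF X) * (gb X \<bullet> h)) *\<^sub>R ga X)
     + (Fk \<gamma> 1 (betaF X) *\<^sub>R dgb X h + (Fk \<gamma> 2 (betaF X) * (gb X \<bullet> h)) *\<^sub>R gb X)"

definition HH :: "(nat \<Rightarrow> real) \<Rightarrow> ('n::finite) entropic \<Rightarrow> 'n entropic \<Rightarrow> 'n entropic" where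
  "HH \<gamma> X h = sK X *\<^sub>R dVV \<gamma> X h + (sK X * (ga X \<bullet> h)) *\<^sub>R VV \<gamma> X"

lemma sK_deriv:
  fixes X :: "('n::finite) entropic"
  assumes C: "snd (snd (snd X)) < 0"
  shows "(sK has_derivative (\<lambda>h. sK X * (ga X \<bullet> h))) (at X)"
  unfolding sK_def[abs_def]
  by (auto intro!: derivative_eq_intros phiA_deriv[OF C] simp: algebra_simps)

lemma Fk_beta_deriv:
  fixes X :: "('n::finite) entropic"
  assumes gp: "\<And>m. m \<ge> 1 \<Longrightarrow> \<gamma> m > 0" and C: "snd (snd (snd X)) < 0"
    and b: "betaF X \<in> interior (S_set \<gamma>)" and k: "k \<le> 1"
  shows "((\<lambda>X. Fk \<gamma> k (betaF X)) has_derivative (\<lambda>h. Fk \<gamma> (Suc k) (betaF X) * (gb X \<bullet> h))) (at X)"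
  using DERIV_compose_FDERIV[OF Fk_deriv[OF gp b k] betaF_deriv[OF C]] by (simp add: mult.commute)

lemma psi_deriv:
  fixes X :: "('n::finite) entropic"
  assumes gp: "\<And>m. m \<ge> 1 \<Longrightarrow> \<gamma> m > 0" and C: "snd (snd (snd X)) < 0"
    and b: "betaF X \<in> interior (S_set \<gamma>)"
  shows "((\<lambda>X. sK X * Fk \<gamma> 0 (betaF X)) has_derivative (\<lambda>h. GG \<gamma> X \<bullet> h)) (at X)"
proof -
  have "((\<lambda>X. sK X * Fk \<gamma> 0 (betaF X)) has_derivative
      (\<lambda>h. sK X * (Fk \<gamma> (Suc 0) (betaF X) * (gb X \<bullet> h)) + sK X * (ga X \<bullet> h) * Fk \<gamma> 0 (betaF X))) (at X)"
    using has_derivative_mult[OF sK_deriv[OF C] Fk_beta_deriv[where k=0, OF gp C b]] by simp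
  moreover have "(\<lambda>h. sK X * (Fk \<gamma> (Suc 0) (betaF X) * (gb X \<bullet> h)) + sK X * (ga X \<bullet> h) * Fk \<gamma> 0 (betaF X)) = (\<lambda>h. GG \<gamma> X \<bullet> h)"
    by (auto simp: fun_eq_iff GG_def VV_def inner_add_left algebra_simps)
  ultimately show ?thesis by simp
qed

lemma GG_deriv:
  fixes X :: "('n::finite) entropic"
  assumes gp: "\<And>m. m \<ge> 1 \<Longrightarrow> \<gamma> m > 0" and C: "snd (snd (snd X)) < 0"
    and b: "betaF X \<in> interior (S_set \<gamma>)"
  shows "(GG \<gamma> has_derivative HH \<gamma> X) (at X)"
proof -
  have V: "(VV \<gamma> has_derivative dVV \<gamma> X) (at X)"
    unfolding VV_def[abs_def] dVV_def[abs_def]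
    using has_derivative_add[OF has_derivative_scaleR[OF Fk_beta_deriv[where k=0, OF gp C b] ga_deriv[OF C]]
      has_derivative_scaleR[OF Fk_beta_deriv[where k=1, OF gp C b] gb_deriv[OF C]]] by (simp add: numeral_2_eq_2)
  show ?thesis unfolding GG_def[abs_def] HH_def[abs_def]
    by (rule has_derivative_scaleR[OF sK_deriv[OF C] V])
qed


lemma dga_inner: "dga X h \<bullet> k = real CARD('n) * snd (snd (snd h)) * snd (snd (snd k)) / (2 * (snd (snd (snd X)))\<^sup>2)"
  for X h k :: "('n::finite) entropic"
  by (simp add: dga_def inner_prod_def)

lemma dgb_inner: "dgb X h \<bullet> k = - (fst h \<bullet> fst k) / (2 * snd (snd (snd X)))
    + snd (snd (snd h)) * (fst X \<bullet> fst k) / (2 * (snd (snd (snd X)))\<^sup>2)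
    + snd (snd (snd k)) * (fst X \<bullet> fst h) / (2 * (snd (snd (snd X)))\<^sup>2)
    - (fst X \<bullet> fst X) * snd (snd (snd h)) * snd (snd (snd k)) / (2 * (snd (snd (snd X)))^3)"
  for X h k :: "('n::finite) entropic"
  by (simp add: dgb_def inner_prod_def inner_add_left algebra_simps add_divide_distrib diff_divide_distrib)

lemma dga_sym: "dga X h \<bullet> k = dga X k \<bullet> h" for X h k :: "('n::finite) entropic"
  unfolding dga_inner by (simp add: algebra_simps)

lemma dgb_sym: "dgb X h \<bullet> k = dgb X k \<bullet> h" for X h k :: "('n::finite) entropic"
  unfolding dgb_inner by (simp add: algebra_simps inner_commute)

lemma dga_sq: "dga X h \<bullet> h = real CARD('n) * (snd (snd (snd h)))\<^sup>2 / (2 * (snd (snd (snd X)))\<^sup>2)"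
  for X h :: "('n::finite) entropic"
  by (simp add: dga_inner power2_eq_square)

lemma dga_nonneg: "dga X h \<bullet> h \<ge> 0" for X h :: "('n::finite) entropic"
  unfolding dga_sq by simp

lemma dga_pos: "snd (snd (snd h)) \<noteq> 0 \<Longrightarrow> snd (snd (snd X)) \<noteq> 0 \<Longrightarrow> dga X h \<bullet> h > 0" for X h :: "('n::finite) entropic"
  unfolding dga_sq by simp

lemma dgb_nonneg:
  fixes X h :: "('n::finite) entropic"
  assumes C: "snd (snd (snd X)) < 0"
  shows "dgb X h \<bullet> h \<ge> 0"
proof -
  define C0 where "C0 = snd (snd (snd X))"
  define c where "c = snd (snd (snd h))"
  define v where "v = fst h - (c / C0) *\<^sub>R fst X"
  have C0: "C0 < 0" using C by (simp add: C0_def)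
  have "dgb X h \<bullet> h = (v \<bullet> v) / (- 2 * C0)"
    unfolding dgb_inner v_def C0_def[symmetric] c_def[symmetric] using C0
    by (simp add: inner_diff_left inner_diff_right inner_commute field_simps power2_eq_square power3_eq_cube)
  moreover have "(v \<bullet> v) / (- 2 * C0) \<ge> 0" using C0 by (intro divide_nonneg_pos) auto
  ultimately show ?thesis by simp
qed

lemma dgb_C0:
  fixes X h :: "('n::finite) entropic"
  assumes "snd (snd (snd h)) = 0"
  shows "dgb X h \<bullet> h = - (fst h \<bullet> fst h) / (2 * snd (snd (snd X)))"
  unfolding dgb_inner using assms by simp

lemma HH_inner:
  fixes X h k :: "('n::finite) entropic"
  shows "HH \<gamma> X h \<bullet> k = sK X * (Fk \<gamma> 0 (betaF X) * (dga X h \<bullet> k) + Fk \<gamma> 1 (betaF X) * (dgb X h \<bullet> k)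
     + Fk \<gamma> 0 (betaF X) * (ga X \<bullet> h) * (ga X \<bullet> k)
     + Fk \<gamma> 1 (betaF X) * ((gb X \<bullet> h) * (ga X \<bullet> k) + (ga X \<bullet> h) * (gb X \<bullet> k))
     + Fk \<gamma> 2 (betaF X) * (gb X \<bullet> h) * (gb X \<bullet> k))"
  unfolding HH_def dVV_def VV_def by (simp add: inner_add_left algebra_simps inner_commute)

lemma HH_sym: "symmetric_op (HH \<gamma> X)" for X :: "('n::finite) entropic"
  unfolding symmetric_op_def
proof (intro allI)
  fix h k :: "'n entropic"
  have "h \<bullet> HH \<gamma> X k = HH \<gamma> X k \<bullet> h" by (rule inner_commute)
  then show "HH \<gamma> X h \<bullet> k = h \<bullet> HH \<gamma> X k"
    unfolding HH_inner using dga_sym[of X h k] dgb_sym[of X h k] by (simp add: algebra_simps)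
qed

lemma HH_posdef:
  fixes X :: "('n::finite) entropic"
  assumes gp: "\<And>m. m \<ge> 1 \<Longrightarrow> \<gamma> m > 0" and C: "snd (snd (snd X)) < 0"
    and b: "betaF X \<in> interior (S_set \<gamma>)"
  shows "pos_def_op (HH \<gamma> X)"
  unfolding pos_def_op_def
proof (intro allI impI)
  fix h :: "'n entropic" assume h0: "h \<noteq> 0"
  define F0 where "F0 = Fk \<gamma> 0 (betaF X)"
  define F1 where "F1 = Fk \<gamma> 1 (betaF X)"
  define F2 where "F2 = Fk \<gamma> 2 (betaF X)"
  define u where "u = ga X \<bullet> h"
  define w where "w = gb X \<bullet> h"
  have F: "F0 > 0" "F1 > 0" "F2 > 0" unfolding F0_def F1_def F2_def by (auto intro: Fk_pos[OF gp b])
  have sK: "sK X > 0" by (simp add: sK_def)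
  have qa: "dga X h \<bullet> h \<ge> 0" by (rule dga_nonneg)
  have qb: "dgb X h \<bullet> h \<ge> 0" by (rule dgb_nonneg[OF C])
  have e: "h \<bullet> HH \<gamma> X h = sK X * ((F0 * u\<^sup>2 + 2 * F1 * u * w + F2 * w\<^sup>2) + F0 * (dga X h \<bullet> h) + F1 * (dgb X h \<bullet> h))"
    unfolding inner_commute[of h] HH_inner F0_def[symmetric] F1_def[symmetric] F2_def[symmetric]
      u_def[symmetric] w_def[symmetric] by (simp add: algebra_simps power2_eq_square)
  have Q: "F0 * u\<^sup>2 + 2 * F1 * u * w + F2 * w\<^sup>2 \<ge> 0"
  proof (cases "u \<noteq> 0 \<or> w \<noteq> 0")
    case True then show ?thesis using Fk_quad[OF gp b True] unfolding F0_def F1_def F2_def by simp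
  next
    case False then show ?thesis by simp
  qed
  have "(F0 * u\<^sup>2 + 2 * F1 * u * w + F2 * w\<^sup>2) + F0 * (dga X h \<bullet> h) + F1 * (dgb X h \<bullet> h) > 0"
  proof (cases "u \<noteq> 0 \<or> w \<noteq> 0")
    case True
    then have "F0 * u\<^sup>2 + 2 * F1 * u * w + F2 * w\<^sup>2 > 0" using Fk_quad[OF gp b True] unfolding F0_def F1_def F2_def by simp
    moreover have "F0 * (dga X h \<bullet> h) \<ge> 0" "F1 * (dgb X h \<bullet> h) \<ge> 0" using F qa qb by auto
    ultimately show ?thesis by linarith
  next
    case False
    then have u0: "u = 0" and w0: "w = 0" by auto
    show ?thesis
    proof (cases "snd (snd (snd h)) = 0")
      case False
      then have "dga X h \<bullet> h > 0" using C by (intro dga_pos) auto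
      then have "F0 * (dga X h \<bullet> h) > 0" using F by simp
      moreover have "F1 * (dgb X h \<bullet> h) \<ge> 0" using F qb by auto
      ultimately show ?thesis using Q by linarith
    next
      case C0: True
      have A0: "fst (snd h) = 0" using u0 C0 unfolding u_def ga_inner by simp
      have D0: "fst h \<noteq> 0"
      proof
        assume "fst h = 0"
        then have "fst (snd (snd h)) = 0" using w0 C0 unfolding w_def gb_inner by simp
        then have "h = 0" using A0 C0 \<open>fst h = 0\<close> by (simp add: prod_eq_iff)
        then show False using h0 by simp
      qed
      have "dgb X h \<bullet> h = - (fst h \<bullet> fst h) / (2 * snd (snd (snd X)))" by (rule dgb_C0[OF C0])
      moreover have "fst h \<bullet> fst h > 0" using D0 by simp
      ultimately have "dgb X h \<bullet> h > 0" using C divide_pos_neg[of "fst h \<bullet> fst h" "2 * snd (snd (snd X))"] by simp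
      then have "F1 * (dgb X h \<bullet> h) > 0" using F by simp
      moreover have "F0 * (dga X h \<bullet> h) \<ge> 0" using F qa by auto
      ultimately show ?thesis using Q by linarith
    qed
  qed
  then show "h \<bullet> HH \<gamma> X h > 0" unfolding e using sK by simp
qed


lemma Sigma_psi:
  fixes W :: "('n::finite) entropic"
  assumes gp: "\<And>m. m \<ge> 1 \<Longrightarrow> \<gamma> m > 0" and C: "snd (snd (snd W)) < 0" and b: "betaF W \<in> S_set \<gamma>"
  shows "Sigma \<gamma> W = sK W * Fk \<gamma> 0 (betaF W)"
proof -
  have "Sigma \<gamma> W = (\<Sum>m. (pi powr (real CARD('n) / 2) * exp (phiA W)) * (real (Suc m) ^ 0 * exp (betaF W * real (Suc m)) / \<gamma> (Suc m)))"
    unfolding Sigma_eq[OF C] Tm_alt ..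
  also have "\<dots> = (pi powr (real CARD('n) / 2) * exp (phiA W)) * (\<Sum>m. real (Suc m) ^ 0 * exp (betaF W * real (Suc m)) / \<gamma> (Suc m))"
    by (rule suminf_mult[OF summable_pow_le[of \<gamma>, OF gp b order_refl le0]])
  also have "\<dots> = sK W * Fk \<gamma> 0 (betaF W)" by (simp add: sK_def Fk_def mult.commute)
  finally show ?thesis .
qed

lemma open_U: "open ({y. snd (snd (snd y)) < 0} \<inter> betaF -` interior (S_set \<gamma>) :: ('n::finite) entropic set)"
proof (rule continuous_open_preimage)
  show "open {y :: 'n entropic. snd (snd (snd y)) < 0}"
    by (rule open_Collect_less) (intro continuous_intros)+
  show "continuous_on {y :: 'n entropic. snd (snd (snd y)) < 0} betaF"
    by (intro continuous_at_imp_continuous_on ballI has_derivative_continuous) (auto intro: betaF_deriv)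
qed simp

lemma hessian_part:
  fixes X :: "('n::finite) entropic"
  assumes gp: "\<And>m. m \<ge> 1 \<Longrightarrow> \<gamma> m > 0" and C: "snd (snd (snd X)) < 0"
    and b: "betaF X \<in> interior (S_set \<gamma>)"
  shows "has_hessian (Sigma \<gamma>) (HH \<gamma> X) X"
  unfolding has_hessian_def
proof (intro exI conjI)
  define U where "U = ({y. snd (snd (snd y)) < 0} \<inter> betaF -` interior (S_set \<gamma>) :: 'n entropic set)"
  have U: "open U" "X \<in> U" using open_U C b by (auto simp: U_def)
  have "\<forall>y\<in>U. (Sigma \<gamma> has_derivative (\<lambda>h. GG \<gamma> y \<bullet> h)) (at y)"
  proof
    fix y assume y: "y \<in> U"
    have yc: "snd (snd (snd y)) < 0" "betaF y \<in> interior (S_set \<gamma>)" using y by (auto simp: U_def)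
    show "(Sigma \<gamma> has_derivative (\<lambda>h. GG \<gamma> y \<bullet> h)) (at y)"
    proof (rule has_derivative_transform_within_open[OF psi_deriv[OF gp yc] U(1) y])
      fix z assume "z \<in> U"
      then have "snd (snd (snd z)) < 0" "betaF z \<in> S_set \<gamma>" using interior_subset by (auto simp: U_def)
      then show "sK z * Fk \<gamma> 0 (betaF z) = Sigma \<gamma> z" using Sigma_psi[of \<gamma>, OF gp] by metis
    qed
  qed
  then show "\<forall>\<^sub>F y in nhds X. (Sigma \<gamma> has_derivative (\<lambda>h. GG \<gamma> y \<bullet> h)) (at y)"
    unfolding eventually_nhds using U by blast
  show "(GG \<gamma> has_derivative HH \<gamma> X) (at X)" by (rule GG_deriv[OF gp C b])
qed

theorem proposition4p3:
  fixes \<gamma> :: "nat \<Rightarrow> real"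
  assumes gamma_nonneg: "\<forall>m\<ge>1. \<gamma> m \<ge> 0"
    and S_nonempty: "S_set \<gamma> \<noteq> {}"
  shows "(\<forall>(D::real^'n) A B C. C < 0 \<and> B - (norm D)\<^sup>2 / (4 * C) \<in> interior (S_set \<gamma>) \<longrightarrow>
            (\<exists>H. has_hessian (Sigma \<gamma>) H (D, A, B, C) \<and> symmetric_op H \<and> pos_def_op H))
         \<and> strict_convex_on (entropic_domain \<gamma> :: 'n entropic set) (Sigma \<gamma>)"
proof
  have gp: "\<And>m. m \<ge> 1 \<Longrightarrow> \<gamma> m > 0" using gamma_pos[OF gamma_nonneg S_nonempty] by blast
  show "\<forall>(D::real^'n) A B C. C < 0 \<and> B - (norm D)\<^sup>2 / (4 * C) \<in> interior (S_set \<gamma>) \<longrightarrow>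
            (\<exists>H. has_hessian (Sigma \<gamma>) H (D, A, B, C) \<and> symmetric_op H \<and> pos_def_op H)"
  proof (intro allI impI)
    fix D :: "real^'n" and A B C :: real
    assume a: "C < 0 \<and> B - (norm D)\<^sup>2 / (4 * C) \<in> interior (S_set \<gamma>)"
    have C: "snd (snd (snd (D,A,B,C))) < 0" using a by simp
    have b: "betaF (D,A,B,C) \<in> interior (S_set \<gamma>)" using a by (simp add: betaF_def)
    show "\<exists>H. has_hessian (Sigma \<gamma>) H (D, A, B, C) \<and> symmetric_op H \<and> pos_def_op H"
      using hessian_part[OF gp C b] HH_sym HH_posdef[OF gp C b] by blast
  qed
  show "strict_convex_on (entropic_domain \<gamma> :: 'n entropic set) (Sigma \<gamma>)"
    by (rule Sigma_strict[OF gp])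
qed

end
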